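(* (i) For every $n\ge0$ and $i\in\{0,1\}$, $\hat\epsilon_n(x,i)=v_n(x,i)-\hat v_n(x,i)$ is nondecreasing in $x$ (equivalently $\Delta_n(x,i)\le\hat\Delta_n(x,i)$ for all $x\ge0$). (ii) For every $n\ge 1$, $\hat B^d_n\le B^d_n$.
   Context: Parameters: $\lambda>0$, $0<\mu_l<\mu_h$, $\delta=\mu_h-\mu_l$, $R\ge 0$, $c>0$, and $h:\{0,1,2,\dots\}\to\mathbb{R}$ nondecreasing and convex with $h(0)=0$; the rates are normalized so that $\lambda+\mu_h+\beta=1$ for a discount rate $\beta>0$. Combined (admission + service-rate control) finite-horizon value functions on $S=\{0,1,2,\dots\}\times\{0,1\}$: $v_0\equiv 0$ and for $n\ge 0$: $v_{n+1}(0,0)=\lambda v_n(0,1)+\mu_h v_n(0,0)$; $v_{n+1}(x,0)=-h(x)+\lambda v_n(x,1)+\mu_l v_n(x-1,0)+\max\{\delta v_n(x,0),-c+\delta v_n(x-1,0)\}$ for $x\ge1$; $v_{n+1}(x,1)=\max\{R+v_{n+1}(x+1,0),v_{n+1}(x,0)\}$ for $x\ge 0$. Admission control subproblem (service rate always $\mu_l$): $\hat v_0\equiv0$ and for $n\ge0$: $\hat v_{n+1}(0,0)=\lambda\hat v_n(0,1)+\mu_h\hat v_n(0,0)$; $\hat v_{n+1}(x,0)=-h(x)+\lambda\hat v_n(x,1)+\mu_l\hat v_n(x-1,0)+\delta\hat v_n(x,0)$ for $x\ge1$; $\hat v_{n+1}(x,1)=\max\{R+\hat v_{n+1}(x+1,0),\hat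 v_{n+1}(x,0)\}$ for $x\ge0$. $\Delta_n(x,i)=v_n(x,i)-v_n(x+1,i)$, $\hat\Delta_n(x,i)=\hat v_n(x,i)-\hat v_n(x+1,i)$. Threshold function: $T_f(\theta)=\sup\{k\ge0:f(k)\le\theta\}$ with $\sup\emptyset=-1$ ($+\infty$ allowed). Admission thresholds: $B^d_n=T_{\Delta_n(\cdot,0)}(R)$ and $\hat B^d_n=T_{\hat\Delta_n(\cdot,0)}(R)$. *)

theory Defs
  imports "HOL-Library.Extended_Real"
begin

text \<open>States (x,i) with x :: nat and i :: nat, i \<in> {0,1}.
  A value function is represented as a function V x i.
  One step of the combined (admission + service-rate) recursion:\<close>

definition vstep :: "real \<Rightarrow> real \<Rightarrow> real \<Rightarrow> real \<Rightarrow> real \<Rightarrow> (nat \<Rightarrow> real)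
     \<Rightarrow> (nat \<Rightarrow> nat \<Rightarrow> real) \<Rightarrow> (nat \<Rightarrow> nat \<Rightarrow> real)" where
  "vstep lam mul muh R c h V =
     (let W = (\<lambda>x. if x = 0 then lam * V 0 1 + muh * V 0 0
                   else - h x + lam * V x 1 + mul * V (x - 1) 0
                        + max ((muh - mul) * V x 0) (- c + (muh - mul) * V (x - 1) 0))
      in (\<lambda>x i. if i = 0 then W x else max (R + W (x + 1)) (W x)))"

text \<open>One step of the admission-control subproblem (service rate always mu_l).\<close>

definition vhstep :: "real \<Rightarrow> real \<Rightarrow> real \<Rightarrow> real \<Rightarrow> (nat \<Rightarrow> real)
     \<Rightarrow> (nat \<Rightarrow> nat \<Rightarrow> real) \<Rightarrow> (nat \<Rightarrow> nat \<Rightarrow> real)" where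
  "vhstep lam mul muh R h V =
     (let W = (\<lambda>x. if x = 0 then lam * V 0 1 + muh * V 0 0
                   else - h x + lam * V x 1 + mul * V (x - 1) 0 + (muh - mul) * V x 0)
      in (\<lambda>x i. if i = 0 then W x else max (R + W (x + 1)) (W x)))"

definition vfun :: "real \<Rightarrow> real \<Rightarrow> real \<Rightarrow> real \<Rightarrow> real \<Rightarrow> (nat \<Rightarrow> real)
     \<Rightarrow> nat \<Rightarrow> nat \<Rightarrow> nat \<Rightarrow> real" where
  "vfun lam mul muh R c h n = (vstep lam mul muh R c h ^^ n) (\<lambda>_ _. 0)"

definition vhfun :: "real \<Rightarrow> real \<Rightarrow> real \<Rightarrow> real \<Rightarrow> (nat \<Rightarrow> real)
     \<Rightarrow> nat \<Rightarrow> nat \<Rightarrow> nat \<Rightarrow> real" where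
  "vhfun lam mul muh R h n = (vhstep lam mul muh R h ^^ n) (\<lambda>_ _. 0)"

text \<open>Threshold function T_f(theta) = sup {k \<ge> 0. f k \<le> theta}, sup of empty set = -1,
  value +infinity allowed.\<close>

definition thresh :: "(nat \<Rightarrow> real) \<Rightarrow> real \<Rightarrow> ereal" where
  "thresh f \<theta> = (if {k. f k \<le> \<theta>} = {} then -1
                   else (SUP k\<in>{k. f k \<le> \<theta>}. ereal (real k)))"

end

theory Submission
  imports Defs
begin

lemma vhstep0: "vhstep lam mul muh R h V x 0 = (if x = 0 then lam * V 0 1 + muh * V 0 0
   else - h x + lam * V x 1 + mul * V (x - 1) 0 + (muh - mul) * V x 0)"
  by (simp add: vhstep_def Let_def)

lemma vhstep1: "vhstep lam mul muh R h V x 1 = max (R + vhstep lam mul muh R h V (x+1) 0) (vhstep lam mul muh R h V x 0)"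
  by (simp add: vhstep_def Let_def)

lemma vstep0: "vstep lam mul muh R c h V x 0 = (if x = 0 then lam * V 0 1 + muh * V 0 0
   else - h x + lam * V x 1 + mul * V (x - 1) 0
                        + max ((muh - mul) * V x 0) (- c + (muh - mul) * V (x - 1) 0))"
  by (simp add: vstep_def Let_def)

lemma vstep1: "vstep lam mul muh R c h V x 1 = max (R + vstep lam mul muh R c h V (x+1) 0) (vstep lam mul muh R c h V x 0)"
  by (simp add: vstep_def Let_def)

lemma maxdiff: "max (R + b) a - max (R + c) (b::real) = max R (a - b) + min (b - c - R) 0"
  by (auto simp: max_def min_def)

lemma U_props:
  fixes W :: "nat \<Rightarrow> real"
  assumes "\<forall>x. 0 \<le> W x - W (Suc x)" "\<forall>x. W x - W (Suc x) \<le> W (Suc x) - W (Suc (Suc x))"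
  shows "0 \<le> max (R + W (Suc x)) (W x) - max (R + W (Suc (Suc x))) (W (Suc x))"
    and "max (R + W (Suc x)) (W x) - max (R + W (Suc (Suc x))) (W (Suc x))
       \<le> max (R + W (Suc (Suc x))) (W (Suc x)) - max (R + W (Suc (Suc (Suc x)))) (W (Suc (Suc x)))"
proof -
  have a: "0 \<le> W x - W (Suc x)" "0 \<le> W (Suc x) - W (Suc (Suc x))" "W x - W (Suc x) \<le> W (Suc x) - W (Suc (Suc x))"
    "W (Suc x) - W (Suc (Suc x)) \<le> W (Suc (Suc x)) - W (Suc (Suc (Suc x)))" using assms by auto
  show "0 \<le> max (R + W (Suc x)) (W x) - max (R + W (Suc (Suc x))) (W (Suc x))"
    unfolding maxdiff using a by (auto simp: max_def min_def)
  show "max (R + W (Suc x)) (W x) - max (R + W (Suc (Suc x))) (W (Suc x))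
       \<le> max (R + W (Suc (Suc x))) (W (Suc x)) - max (R + W (Suc (Suc (Suc x)))) (W (Suc (Suc x)))"
    unfolding maxdiff using a by (auto simp: max_def min_def)
qed

lemma U_cmp:
  fixes W Wh :: "nat \<Rightarrow> real"
  assumes "\<forall>x. W x - W (Suc x) \<le> Wh x - Wh (Suc x)"
  shows "max (R + W (Suc x)) (W x) - max (R + W (Suc (Suc x))) (W (Suc x))
    \<le> max (R + Wh (Suc x)) (Wh x) - max (R + Wh (Suc (Suc x))) (Wh (Suc x))"
proof -
  have a: "W x - W (Suc x) \<le> Wh x - Wh (Suc x)" "W (Suc x) - W (Suc (Suc x)) \<le> Wh (Suc x) - Wh (Suc (Suc x))"
    using assms by auto
  show ?thesis unfolding maxdiff using a by (auto simp: max_def min_def)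
qed

lemma hat_W:
  fixes V :: "nat \<Rightarrow> nat \<Rightarrow> real" and h :: "nat \<Rightarrow> real" and R :: real
  assumes lam: "lam \<ge> 0" and mul: "mul \<ge> 0" and muh: "muh \<ge> mul"
    and hm: "mono h" and hc: "\<And>x. h (x + 1) - h x \<le> h (x + 2) - h (x + 1)" and h0: "h 0 = 0"
    and n0: "\<forall>x. 0 \<le> V x 0 - V (Suc x) 0" and n1: "\<forall>x. 0 \<le> V x 1 - V (Suc x) 1"
    and c0: "\<forall>x. V x 0 - V (Suc x) 0 \<le> V (Suc x) 0 - V (Suc (Suc x)) 0"
    and c1: "\<forall>x. V x 1 - V (Suc x) 1 \<le> V (Suc x) 1 - V (Suc (Suc x)) 1"
  defines "W \<equiv> \<lambda>x. vhstep lam mul muh R h V x 0"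
  shows "\<forall>x. 0 \<le> W x - W (Suc x)" and "\<forall>x. W x - W (Suc x) \<le> W (Suc x) - W (Suc (Suc x))"
proof -
  have D0: "W 0 - W (Suc 0) = h 1 + lam * (V 0 1 - V 1 1) + (muh - mul) * (V 0 0 - V 1 0)"
    unfolding W_def vhstep0 by (simp add: algebra_simps)
  have DS: "W (Suc y) - W (Suc (Suc y)) = (h (Suc (Suc y)) - h (Suc y)) + lam * (V (Suc y) 1 - V (Suc (Suc y)) 1)
      + mul * (V y 0 - V (Suc y) 0) + (muh - mul) * (V (Suc y) 0 - V (Suc (Suc y)) 0)" for y
    unfolding W_def vhstep0 by (simp add: algebra_simps)
  have hmon: "h a \<le> h b" if "a \<le> b" for a b using hm that by (simp add: mono_def)
  have md: "0 \<le> muh - mul" using muh by simp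
  show "\<forall>x. 0 \<le> W x - W (Suc x)"
  proof
    fix x show "0 \<le> W x - W (Suc x)"
    proof (cases x)
      case 0
      have "h 0 \<le> h 1" by (rule hmon) simp
      moreover have "0 \<le> lam * (V 0 1 - V 1 1)" using lam n1 by simp
      moreover have "0 \<le> (muh - mul) * (V 0 0 - V 1 0)" using md n0 by simp
      ultimately show ?thesis using 0 D0 h0 by simp
    next
      case (Suc y)
      have "h (Suc y) \<le> h (Suc (Suc y))" by (rule hmon) simp
      moreover have "0 \<le> lam * (V (Suc y) 1 - V (Suc (Suc y)) 1)" using lam n1 by simp
      moreover have "0 \<le> mul * (V y 0 - V (Suc y) 0)" using mul n0 by simp
      moreover have "0 \<le> (muh - mul) * (V (Suc y) 0 - V (Suc (Suc y)) 0)" using md n0 by simp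
      ultimately show ?thesis using Suc DS[of y] by simp
    qed
  qed
  show "\<forall>x. W x - W (Suc x) \<le> W (Suc x) - W (Suc (Suc x))"
  proof
    fix x show "W x - W (Suc x) \<le> W (Suc x) - W (Suc (Suc x))"
    proof (cases x)
      case 0
      have "h 1 - h 0 \<le> h 2 - h 1" using hc[of 0] by (simp add: numeral_2_eq_2)
      moreover have "lam * (V 0 1 - V 1 1) \<le> lam * (V 1 1 - V 2 1)"
        using lam c1[rule_format, of 0] by (intro mult_left_mono) (auto simp: numeral_2_eq_2)
      moreover have "0 \<le> mul * (V 0 0 - V (Suc 0) 0)" using mul n0 by simp
      moreover have "(muh - mul) * (V 0 0 - V 1 0) \<le> (muh - mul) * (V 1 0 - V 2 0)"
        using md c0[rule_format, of 0] by (intro mult_left_mono) (auto simp: numeral_2_eq_2)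
      ultimately show ?thesis using 0 D0 DS[of 0] h0 by (simp add: numeral_2_eq_2)
    next
      case (Suc y)
      have "h (Suc (Suc y)) - h (Suc y) \<le> h (Suc (Suc (Suc y))) - h (Suc (Suc y))"
        using hc[of "Suc y"] by (simp add: numeral_2_eq_2)
      moreover have "lam * (V (Suc y) 1 - V (Suc (Suc y)) 1) \<le> lam * (V (Suc (Suc y)) 1 - V (Suc (Suc (Suc y))) 1)"
        using lam c1 by (intro mult_left_mono) auto
      moreover have "mul * (V y 0 - V (Suc y) 0) \<le> mul * (V (Suc y) 0 - V (Suc (Suc y)) 0)"
        using mul c0 by (intro mult_left_mono) auto
      moreover have "(muh - mul) * (V (Suc y) 0 - V (Suc (Suc y)) 0) \<le> (muh - mul) * (V (Suc (Suc y)) 0 - V (Suc (Suc (Suc y))) 0)"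
        using md c0 by (intro mult_left_mono) auto
      ultimately show ?thesis using Suc DS[of y] DS[of "Suc y"] by simp
    qed
  qed
qed

lemma comb_W:
  fixes V Vh :: "nat \<Rightarrow> nat \<Rightarrow> real" and h :: "nat \<Rightarrow> real" and R c :: real
  assumes lam: "lam \<ge> 0" and mul: "mul \<ge> 0" and muh: "muh \<ge> mul"
    and c0: "\<forall>x. Vh x 0 - Vh (Suc x) 0 \<le> Vh (Suc x) 0 - Vh (Suc (Suc x)) 0"
    and p0: "\<forall>x. V x 0 - V (Suc x) 0 \<le> Vh x 0 - Vh (Suc x) 0"
    and p1: "\<forall>x. V x 1 - V (Suc x) 1 \<le> Vh x 1 - Vh (Suc x) 1"
  defines "W \<equiv> \<lambda>x. vstep lam mul muh R c h V x 0"
    and "Wh \<equiv> \<lambda>x. vhstep lam mul muh R h Vh x 0"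
  shows "\<forall>x. W x - W (Suc x) \<le> Wh x - Wh (Suc x)"
proof
  fix x
  have md: "0 \<le> muh - mul" using muh by simp
  show "W x - W (Suc x) \<le> Wh x - Wh (Suc x)"
  proof (cases x)
    case 0
    have D0h: "Wh 0 - Wh (Suc 0) = h 1 + lam * (Vh 0 1 - Vh 1 1) + (muh - mul) * (Vh 0 0 - Vh 1 0)"
      unfolding Wh_def vhstep0 by (simp add: algebra_simps)
    have "(muh - mul) * V 1 0 \<le> max ((muh - mul) * V 1 0) (- c + (muh - mul) * V 0 0)" by simp
    then have D0: "W 0 - W (Suc 0) \<le> h 1 + lam * (V 0 1 - V 1 1) + (muh - mul) * (V 0 0 - V 1 0)"
      unfolding W_def vstep0 by (simp add: algebra_simps)
    have "lam * (V 0 1 - V 1 1) \<le> lam * (Vh 0 1 - Vh 1 1)" using lam p1 by (intro mult_left_mono) auto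
    moreover have "(muh - mul) * (V 0 0 - V 1 0) \<le> (muh - mul) * (Vh 0 0 - Vh 1 0)" using md p0 by (intro mult_left_mono) auto
    ultimately show ?thesis using 0 D0 D0h by simp
  next
    case (Suc y)
    have DSh: "Wh (Suc y) - Wh (Suc (Suc y)) = (h (Suc (Suc y)) - h (Suc y)) + lam * (Vh (Suc y) 1 - Vh (Suc (Suc y)) 1)
      + mul * (Vh y 0 - Vh (Suc y) 0) + (muh - mul) * (Vh (Suc y) 0 - Vh (Suc (Suc y)) 0)"
      unfolding Wh_def vhstep0 by (simp add: algebra_simps)
    have DS: "W (Suc y) - W (Suc (Suc y)) = (h (Suc (Suc y)) - h (Suc y)) + lam * (V (Suc y) 1 - V (Suc (Suc y)) 1)
      + mul * (V y 0 - V (Suc y) 0) + (max ((muh - mul) * V (Suc y) 0) (- c + (muh - mul) * V y 0)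
         - max ((muh - mul) * V (Suc (Suc y)) 0) (- c + (muh - mul) * V (Suc y) 0))"
      unfolding W_def vstep0 by (simp add: algebra_simps)
    have e1: "(muh - mul) * (V (Suc y) 0 - V (Suc (Suc y)) 0) \<le> (muh - mul) * (Vh (Suc y) 0 - Vh (Suc (Suc y)) 0)"
      using md p0 by (intro mult_left_mono) auto
    have e2: "(muh - mul) * (V y 0 - V (Suc y) 0) \<le> (muh - mul) * (Vh (Suc y) 0 - Vh (Suc (Suc y)) 0)"
      using md p0[rule_format, of y] c0[rule_format, of y] by (intro mult_left_mono) auto
    have br: "max ((muh - mul) * V (Suc y) 0) (- c + (muh - mul) * V y 0)
         - max ((muh - mul) * V (Suc (Suc y)) 0) (- c + (muh - mul) * V (Suc y) 0)
       \<le> (muh - mul) * (Vh (Suc y) 0 - Vh (Suc (Suc y)) 0)"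
      using e1 e2 by (auto simp: max_def algebra_simps)
    have "lam * (V (Suc y) 1 - V (Suc (Suc y)) 1) \<le> lam * (Vh (Suc y) 1 - Vh (Suc (Suc y)) 1)"
      using lam p1 by (intro mult_left_mono) auto
    moreover have "mul * (V y 0 - V (Suc y) 0) \<le> mul * (Vh y 0 - Vh (Suc y) 0)"
      using mul p0 by (intro mult_left_mono) auto
    ultimately show ?thesis using Suc DS DSh br by simp
  qed
qed

lemma main_ind:
  fixes lam mul muh R c :: real and h :: "nat \<Rightarrow> real"
  assumes lam: "lam \<ge> 0" and mul: "mul \<ge> 0" and muh: "muh \<ge> mul"
    and hm: "mono h" and hc: "\<And>x. h (x + 1) - h x \<le> h (x + 2) - h (x + 1)" and h0: "h 0 = 0"
  shows "(\<forall>x. 0 \<le> vhfun lam mul muh R h n x 0 - vhfun lam mul muh R h n (Suc x) 0)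
    \<and> (\<forall>x. 0 \<le> vhfun lam mul muh R h n x 1 - vhfun lam mul muh R h n (Suc x) 1)
    \<and> (\<forall>x. vhfun lam mul muh R h n x 0 - vhfun lam mul muh R h n (Suc x) 0
          \<le> vhfun lam mul muh R h n (Suc x) 0 - vhfun lam mul muh R h n (Suc (Suc x)) 0)
    \<and> (\<forall>x. vhfun lam mul muh R h n x 1 - vhfun lam mul muh R h n (Suc x) 1
          \<le> vhfun lam mul muh R h n (Suc x) 1 - vhfun lam mul muh R h n (Suc (Suc x)) 1)
    \<and> (\<forall>x. vfun lam mul muh R c h n x 0 - vfun lam mul muh R c h n (Suc x) 0
          \<le> vhfun lam mul muh R h n x 0 - vhfun lam mul muh R h n (Suc x) 0)
    \<and> (\<forall>x. vfun lam mul muh R c h n x 1 - vfun lam mul muh R c h n (Suc x) 1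
          \<le> vhfun lam mul muh R h n x 1 - vhfun lam mul muh R h n (Suc x) 1)"
proof (induction n)
  case 0
  then show ?case by (simp add: vhfun_def vfun_def)
next
  case (Suc n)
  define V where "V = vfun lam mul muh R c h n"
  define Vh where "Vh = vhfun lam mul muh R h n"
  have eV: "vfun lam mul muh R c h (Suc n) = vstep lam mul muh R c h V"
    by (simp add: V_def vfun_def)
  have eVh: "vhfun lam mul muh R h (Suc n) = vhstep lam mul muh R h Vh"
    by (simp add: Vh_def vhfun_def)
  define W where "W = (\<lambda>x. vstep lam mul muh R c h V x 0)"
  define Wh where "Wh = (\<lambda>x. vhstep lam mul muh R h Vh x 0)"
  have IH: "\<forall>x. 0 \<le> Vh x 0 - Vh (Suc x) 0" "\<forall>x. 0 \<le> Vh x 1 - Vh (Suc x) 1"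
    "\<forall>x. Vh x 0 - Vh (Suc x) 0 \<le> Vh (Suc x) 0 - Vh (Suc (Suc x)) 0"
    "\<forall>x. Vh x 1 - Vh (Suc x) 1 \<le> Vh (Suc x) 1 - Vh (Suc (Suc x)) 1"
    "\<forall>x. V x 0 - V (Suc x) 0 \<le> Vh x 0 - Vh (Suc x) 0"
    "\<forall>x. V x 1 - V (Suc x) 1 \<le> Vh x 1 - Vh (Suc x) 1"
    using Suc.IH unfolding V_def Vh_def by blast+
  have h1: "\<forall>x. 0 \<le> Wh x - Wh (Suc x)" "\<forall>x. Wh x - Wh (Suc x) \<le> Wh (Suc x) - Wh (Suc (Suc x))"
    using hat_W[OF lam mul muh hm hc h0 IH(1-4)] unfolding Wh_def by blast+
  have h2: "\<forall>x. W x - W (Suc x) \<le> Wh x - Wh (Suc x)"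
    using comb_W[OF lam mul muh IH(3,5,6)] unfolding W_def Wh_def by blast
  have s0: "vstep lam mul muh R c h V x 0 = W x" "vhstep lam mul muh R h Vh x 0 = Wh x" for x
    by (simp_all add: W_def Wh_def)
  have s1: "vstep lam mul muh R c h V x 1 = max (R + W (Suc x)) (W x)"
    "vhstep lam mul muh R h Vh x 1 = max (R + Wh (Suc x)) (Wh x)" for x
    by (simp_all add: W_def Wh_def vstep_def vhstep_def Let_def)
  show ?case unfolding eV eVh s0 s1
    using h1 h2 U_props[OF h1] U_cmp[OF h2] by blast
qed

lemma thresh_mono:
  assumes "\<And>k. g k \<le> f k"
  shows "thresh f \<theta> \<le> thresh g \<theta>"
proof -
  have sub: "{k. f k \<le> \<theta>} \<subseteq> {k. g k \<le> \<theta>}" using assms by (auto intro: order_trans)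
  show ?thesis
  proof (cases "{k. g k \<le> \<theta>} = {}")
    case True
    then have "{k. f k \<le> \<theta>} = {}" using sub by blast
    then show ?thesis using True by (simp add: thresh_def)
  next
    case False
    then obtain k0 where k0: "g k0 \<le> \<theta>" by blast
    have ge: "ereal (real k0) \<le> (SUP k\<in>{k. g k \<le> \<theta>}. ereal (real k))"
      using k0 by (intro SUP_upper) auto
    show ?thesis
    proof (cases "{k. f k \<le> \<theta>} = {}")
      case True
      have "(-1::ereal) \<le> 0" by simp
      also have "(0::ereal) \<le> ereal (real k0)" by simp
      finally have "(-1::ereal) \<le> ereal (real k0)" .
      then show ?thesis using True False ge by (simp add: thresh_def)
    next
      case F2: False
      have "(SUP k\<in>{k. f k \<le> \<theta>}. ereal (real k)) \<le> (SUP k\<in>{k. g k \<le> \<theta>}. ereal (real k))"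
        using sub by (rule SUP_subset_mono) simp
      then show ?thesis using False F2 unfolding thresh_def by (simp only: if_False)
    qed
  qed
qed

theorem theorem3:
  fixes lam mul muh R c :: real and h :: "nat \<Rightarrow> real"
  assumes "lam > 0" and "0 < mul" and "mul < muh" and "R \<ge> 0" and "c > 0"
    and "mono h" and "\<And>x. h (x + 1) - h x \<le> h (x + 2) - h (x + 1)" and "h 0 = 0"
    and "lam + muh < 1"
  shows "(\<forall>n i. i \<in> {0, 1} \<longrightarrow>
            mono (\<lambda>x. vfun lam mul muh R c h n x i - vhfun lam mul muh R h n x i))
       \<and> (\<forall>n \<ge> 1.
            thresh (\<lambda>x. vhfun lam mul muh R h n x 0 - vhfun lam mul muh R h n (x + 1) 0) R
          \<le> thresh (\<lambda>x. vfun lam mul muh R c h n x 0 - vfun lam mul muh R c h n (x + 1) 0) R)"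
proof -
  have a: "lam \<ge> 0" "mul \<ge> 0" "muh \<ge> mul" using assms by auto
  note M = main_ind[where R=R and c=c, OF a assms(6,7,8)]
  have P1: "\<forall>n i. i \<in> {0, 1} \<longrightarrow>
            mono (\<lambda>x. vfun lam mul muh R c h n x i - vhfun lam mul muh R h n x i)"
  proof (intro allI impI)
    fix n i :: nat assume i: "i \<in> {0, 1}"
    have "\<forall>x. vfun lam mul muh R c h n x i - vfun lam mul muh R c h n (Suc x) i
          \<le> vhfun lam mul muh R h n x i - vhfun lam mul muh R h n (Suc x) i"
      using i M[of n] by auto
    then show "mono (\<lambda>x. vfun lam mul muh R c h n x i - vhfun lam mul muh R h n x i)"
      by (intro mono_iff_le_Suc[THEN iffD2]) (auto simp: algebra_simps)
  qed
  have P2: "\<forall>n \<ge> 1.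
            thresh (\<lambda>x. vhfun lam mul muh R h n x 0 - vhfun lam mul muh R h n (x + 1) 0) R
          \<le> thresh (\<lambda>x. vfun lam mul muh R c h n x 0 - vfun lam mul muh R c h n (x + 1) 0) R"
    using M by (auto intro!: thresh_mono)
  show ?thesis using P1 P2 by blast
qed

end
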